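(* Let $\beta\in\mathbb{R}^3$ with $\|\beta\|\le 1$ and $\rho=\frac12(I_2+\sum_{i=1}^3\beta_i\sigma_i)$. Then: (i) A matrix $P=\frac14\big(I_4+\sum_i\beta_i\sigma_i\otimes I_2+\sum_i\gamma_i I_2\otimes\sigma_i+\sum_{l,k}\delta_{lk}\sigma_l\otimes\sigma_k\big)$ (with this given $\beta$, and $\gamma\in\mathbb{R}^3$, $\delta\in M_3(\mathbb{R})$) is a purification of $\rho$ if and only if $\gamma=\delta^T\beta$ and $\delta$ solves the system $$\delta\delta^T=(1-\|\beta\|^2)I_3+\beta\beta^T,\qquad \det\delta=\|\beta\|^2-1,$$ and every purification of $\rho$ is of this form. (ii) This system always has a solution, and if $\tilde\delta$ is any one solution, then the set of all solutions is exactly $\{\tilde\delta S: S\in SO(3,\mathbb{R})\}$. (iii) Consequently, when $\|\beta\|<1$ the set of purifications of $\rho$ is in bijection with $SO(3,\mathbb{R})$ (via $S\mapsto$ the purification with $\delta=\tilde\delta S$), and when $\|\beta\|=1$ it is in bijection with the unit sphere $S^2\subset\mathbb{R}^3$.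
   Context: $\sigma_1,\sigma_2,\sigma_3$ are the Pauli matrices. A pure state on $\mathbb{C}^2\otimes\mathbb{C}^2$ is a positive semidefinite trace-one matrix that is a projection. A purification of a $2\times2$ density matrix $\rho$ is a pure state $P$ on $\mathbb{C}^2\otimes\mathbb{C}^2$ whose partial trace over the second tensor factor equals $\rho$. For $P=\frac14\big(I_4+\sum_i\beta_i\sigma_i\otimes I_2+\sum_i\gamma_i I_2\otimes\sigma_i+\sum_{l,k}\delta_{lk}\sigma_l\otimes\sigma_k\big)$ the partial trace over the second factor is $\frac12(I_2+\sum_i\beta_i\sigma_i)$ and over the first factor is $\frac12(I_2+\sum_i\gamma_i\sigma_i)$. *)

theory Defs
  imports "HOL-Analysis.Analysis"
begin

text \<open>Complex 2x2 matrices are indexed by the two-element type 2; the space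
  C^2 (x) C^2 is indexed by the product type 2 \<times> 2, so 4x4 matrices on the
  tensor product have type complex^(2\<times>2)^(2\<times>2).\<close>

type_synonym cmat2 = "complex^2^2"
type_synonym cmat4 = "complex^(2 \<times> 2)^(2 \<times> 2)"

text \<open>Pauli matrices sigma_1, sigma_2, sigma_3 (indices 1, 2, 3 of type 3; the basis of C^2 is ordered 0, 1 (type 2);
  note 3 = 0 in type 3).\<close>
definition pauli :: "3 \<Rightarrow> cmat2" where
  "pauli k =
     (if k = 1 then (\<chi> i j. if i = j then 0 else 1)
      else if k = 2 then (\<chi> i j. if i = j then 0 else if i = 0 then - \<i> else \<i>)
      else (\<chi> i j. if i = j then (if i = 0 then 1 else -1) else 0))"

definition kron :: "cmat2 \<Rightarrow> cmat2 \<Rightarrow> cmat4" where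
  "kron A B = (\<chi> p q. A $ fst p $ fst q * B $ snd p $ snd q)"

definition ptrace2 :: "cmat4 \<Rightarrow> cmat2" where
  "ptrace2 M = (\<chi> i k. \<Sum>j\<in>UNIV. M $ (i,j) $ (k,j))"

definition cadjoint :: "complex^'n^'n \<Rightarrow> complex^'n^'n" where
  "cadjoint M = (\<chi> i j. cnj (M $ j $ i))"

definition hermitian :: "complex^'n^'n \<Rightarrow> bool" where
  "hermitian M \<longleftrightarrow> cadjoint M = M"

definition psd :: "complex^'n^'n \<Rightarrow> bool" where
  "psd M \<longleftrightarrow> hermitian M \<and>
     (\<forall>x :: complex^'n. 0 \<le> Re (\<Sum>i\<in>UNIV. \<Sum>j\<in>UNIV. cnj (x $ i) * M $ i $ j * x $ j))"

definition pure_state :: "cmat4 \<Rightarrow> bool" where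
  "pure_state P \<longleftrightarrow> psd P \<and> trace P = 1 \<and> hermitian P \<and> P ** P = P"

definition purification :: "cmat2 \<Rightarrow> cmat4 \<Rightarrow> bool" where
  "purification \<rho> P \<longleftrightarrow> pure_state P \<and> ptrace2 P = \<rho>"

definition rho :: "real^3 \<Rightarrow> cmat2" where
  "rho \<beta> = (\<chi> a b. (1/2) * ((mat 1 :: cmat2) $ a $ b
                 + (\<Sum>i\<in>UNIV. complex_of_real (\<beta> $ i) * pauli i $ a $ b)))"

definition Pmat :: "real^3 \<Rightarrow> real^3 \<Rightarrow> real^3^3 \<Rightarrow> cmat4" where
  "Pmat \<beta> \<gamma> \<delta> = (\<chi> a b. (1/4) * ((mat 1 :: cmat4) $ a $ b
      + (\<Sum>i\<in>UNIV. complex_of_real (\<beta> $ i) * kron (pauli i) (mat 1) $ a $ b)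
      + (\<Sum>i\<in>UNIV. complex_of_real (\<gamma> $ i) * kron (mat 1) (pauli i) $ a $ b)
      + (\<Sum>l\<in>UNIV. \<Sum>k\<in>UNIV. complex_of_real (\<delta> $ l $ k) * kron (pauli l) (pauli k) $ a $ b)))"

definition outer :: "real^3 \<Rightarrow> real^3 \<Rightarrow> real^3^3" where
  "outer u v = (\<chi> i j. u $ i * v $ j)"

definition delta_system :: "real^3 \<Rightarrow> real^3^3 \<Rightarrow> bool" where
  "delta_system \<beta> \<delta> \<longleftrightarrow>
     \<delta> ** transpose \<delta> = (1 - (norm \<beta>)\<^sup>2) *\<^sub>R mat 1 + outer \<beta> \<beta>
     \<and> det \<delta> = (norm \<beta>)\<^sup>2 - 1"

end

theory Submission
  imports Defs
begin

definition pc :: "real \<Rightarrow> real^3 \<Rightarrow> real^3 \<Rightarrow> real^3^3 \<Rightarrow> cmat4" where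
  "pc c x y z = (\<chi> a b. complex_of_real c * (mat 1 :: cmat4) $ a $ b
      + (\<Sum>i\<in>UNIV. complex_of_real (x $ i) * kron (pauli i) (mat 1) $ a $ b)
      + (\<Sum>i\<in>UNIV. complex_of_real (y $ i) * kron (mat 1) (pauli i) $ a $ b)
      + (\<Sum>l\<in>UNIV. \<Sum>k\<in>UNIV. complex_of_real (z $ l $ k) * kron (pauli l) (pauli k) $ a $ b))"

lemma sum_22: "sum f (UNIV :: (2\<times>2) set) = f(1,1)+f(1,2)+f(2,1)+f(2,2)"
  by (simp add: UNIV_Times_UNIV[symmetric] UNIV_2 sum.cartesian_product[symmetric] add.assoc)

lemmas pcsimps = pc_def kron_def sum_3 pauli_def mat_def

lemma Pmat_pc: "Pmat \<beta> \<gamma> \<delta> = pc (1/4) ((1/4) *\<^sub>R \<beta>) ((1/4) *\<^sub>R \<gamma>) ((1/4) *\<^sub>R \<delta>)"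
  apply (simp add: vec_eq_iff split_paired_All forall_2)
  apply (simp add: pcsimps Pmat_def)
  done

lemma pc_inj: assumes "pc c x y z = pc c' x' y' z'"
  shows "c = c' \<and> x = x' \<and> y = y' \<and> z = z'"
proof -
  from assms have "\<forall>a b. pc c x y z $ a $ b = pc c' x' y' z' $ a $ b" by simp
  then have h: "\<forall>a b. Re (pc c x y z $ a $ b) = Re (pc c' x' y' z' $ a $ b) \<and> 
     Im (pc c x y z $ a $ b) = Im (pc c' x' y' z' $ a $ b)" by simp
  then show ?thesis
    apply (simp only: split_paired_All forall_2)
    apply (simp add: pcsimps vec_eq_iff forall_3)
    done
qed

lemma hermitian_pc: "hermitian (pc c x y z)"
  unfolding hermitian_def cadjoint_def
  apply (simp add: vec_eq_iff split_paired_All forall_2)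
  apply (simp add: pcsimps complex_eq_iff)
  done

lemma trace_pc: "trace (pc c x y z) = complex_of_real (4 * c)"
  unfolding trace_def sum_22
  apply (simp add: pcsimps complex_eq_iff)
  done

lemma ptrace_Pmat: "ptrace2 (Pmat \<beta> \<gamma> \<delta>) = rho \<beta>"
  unfolding ptrace2_def rho_def
  apply (simp add: vec_eq_iff split_paired_All forall_2 sum_2)
  apply (simp add: pauli_def kron_def Pmat_def mat_def sum_3 complex_eq_iff)
  apply (simp add: field_simps)
  done

definition tc :: "cmat4 \<Rightarrow> cmat4 \<Rightarrow> real" where
  "tc A M = Re (\<Sum>p\<in>UNIV. \<Sum>q\<in>UNIV. A $ p $ q * M $ q $ p) / 4"

lemma herm_decomp: assumes "hermitian M"
  shows "M = pc (tc (mat 1) M) (\<chi> i. tc (kron (pauli i) (mat 1)) M) (\<chi> i. tc (kron (mat 1) (pauli i)) M)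
     (\<chi> l k. tc (kron (pauli l) (pauli k)) M)"
proof -
  from assms have "\<forall>a b. M $ a $ b = cnj (M $ b $ a)"
    unfolding hermitian_def cadjoint_def vec_eq_iff by simp
  then have h: "\<forall>a b. Re (M $ a $ b) = Re (M $ b $ a) \<and> Im (M $ a $ b) = - Im (M $ b $ a)"
    by (metis cnj.sel)
  note h2 = h[simplified split_paired_All forall_2]
  show ?thesis
    apply (simp add: vec_eq_iff split_paired_All forall_2)
    apply (simp add: pcsimps tc_def sum_22 complex_eq_iff)
    apply (insert h2)
    apply (elim conjE)
    apply (intro conjI)
    apply argo+
    done
qed

definition nx :: "3 \<Rightarrow> 3" where "nx k = (if k = 1 then 2 else if k = 2 then 3 else 1)"
definition nx2 :: "3 \<Rightarrow> 3" where "nx2 k = (if k = 1 then 3 else if k = 2 then 1 else 2)"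

definition cof3 :: "real^3^3 \<Rightarrow> real^3^3" where
  "cof3 z = (\<chi> k n. z$(nx k)$(nx n) * z$(nx2 k)$(nx2 n) - z$(nx k)$(nx2 n)*z$(nx2 k)$(nx n))"

lemmas bf = vec_eq_iff forall_3 sum_3 matrix_matrix_mult_def matrix_vector_mult_def
  transpose_def outer_def cof3_def nx_def nx2_def mat_def det_3 inner_vec_def

lemma M1: "cof3 d ** transpose d = det d *\<^sub>R mat 1"
  by (simp add: bf algebra_simps)
lemma M1b: "transpose d ** cof3 d = det d *\<^sub>R mat 1"
  by (simp add: bf algebra_simps)
lemma M2: "outer u v ** transpose d = outer u (d *v v)"
  by (simp add: bf algebra_simps)
lemma M3: "outer u v *v w = (v \<bullet> w) *\<^sub>R u"
  by (simp add: bf algebra_simps)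
lemma M4: "transpose (outer u v) = outer v u"
  by (simp add: bf algebra_simps)
lemma M5: "cof3 (outer u v) = 0"
  by (simp add: bf algebra_simps)
lemma M7: fixes A :: "real^3^3" shows "(transpose A *v u) \<bullet> v = u \<bullet> (A *v v)"
  by (simp add: bf algebra_simps)
lemma M8: "(A - B) ** (C::real^3^3) = A ** C - B ** C"
  by (simp add: bf algebra_simps)
lemma M9: "(A + B) ** (C::real^3^3) = A ** C + B ** C"
  by (simp add: bf algebra_simps)
lemma M10: "(A ** B) *v (v::real^3) = A *v (B *v v)"
  by (simp add: matrix_vector_mul_assoc)
lemma M11: "(A + B) *v (v::real^3) = A *v v + B *v v"
  by (simp add: bf algebra_simps)
lemma M12: "(c *\<^sub>R A) *v (v::real^3) = c *\<^sub>R (A *v v)"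
  by (simp add: bf algebra_simps)
lemma M13: "(c *\<^sub>R A) ** (B::real^3^3) = c *\<^sub>R (A ** B)"
  by (simp add: bf algebra_simps)
lemma M14: "det (outer u v) = 0"
  by (simp add: bf algebra_simps)
lemma M15: "outer u v ** outer v' w = (v \<bullet> v') *\<^sub>R outer u w"
  by (simp add: bf algebra_simps)
lemma M16: "det (s *\<^sub>R mat 1 + t *\<^sub>R outer u u) = s^3 + s^2 * t * (u \<bullet> u)"
  by (simp add: bf algebra_simps power2_eq_square power3_eq_cube)
lemma M17: "(\<Sum>l\<in>UNIV. \<Sum>k\<in>UNIV. d$l$k * d$l$k) = trace (d ** transpose d)"
  by (simp add: bf trace_def algebra_simps)
lemma M18: "trace (s *\<^sub>R mat 1 + t *\<^sub>R outer u u) = 3 * s + t * (u \<bullet> u)"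
  by (simp add: bf trace_def algebra_simps)
lemma M19: "mat 1 *v (v::real^3) = v"
  by simp
lemma M20: "det (- A :: real^3^3) = - det A"
  by (simp add: bf algebra_simps)

lemma M21: "trace (outer u u - d *\<^sub>R mat 1) = u \<bullet> u - 3 * d"
  by (simp add: bf trace_def algebra_simps)
lemma M22: "(\<Sum>k\<in>UNIV. (D$i$k - u$i*g$k)^2) = (D ** transpose D)$i$i - 2*u$i*(D *v g)$i + (u$i)^2*(g \<bullet> g)"
  for D :: "real^3^3"
  by (simp add: bf power2_eq_square algebra_simps)

lemma M23: "A ** (c *\<^sub>R mat 1) = c *\<^sub>R (A::real^3^3)"
  by (simp add: bf algebra_simps)

definition frob :: "real^3^3 \<Rightarrow> real" where "frob d = (\<Sum>l\<in>UNIV. \<Sum>k\<in>UNIV. d$l$k * d$l$k)"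

lemma lemR:
  fixes \<beta> :: "real^3" and \<delta> :: "real^3^3"
  assumes dd: "\<delta> ** transpose \<delta> = outer \<beta> \<beta>" and b1: "\<beta> \<bullet> \<beta> = 1"
  shows "\<delta> = outer \<beta> (transpose \<delta> *v \<beta>)" "(transpose \<delta> *v \<beta>) \<bullet> (transpose \<delta> *v \<beta>) = 1"
proof -
  define g where "g = transpose \<delta> *v \<beta>"
  have dg: "\<delta> *v g = \<beta>"
    unfolding g_def M10[symmetric] dd M3 b1 by simp
  have gg: "g \<bullet> g = 1"
    unfolding g_def M7 using dg b1 g_def by simp
  then show "(transpose \<delta> *v \<beta>) \<bullet> (transpose \<delta> *v \<beta>) = 1" unfolding g_def .
  have "\<forall>k. \<delta>$i$k - \<beta>$i*g$k = 0" for i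
  proof -
    have "(\<Sum>k\<in>UNIV. (\<delta>$i$k - \<beta>$i*g$k)^2) = 0"
      unfolding M22 dd dg gg by (simp add: outer_def power2_eq_square)
    then have "\<forall>k\<in>UNIV. (\<delta>$i$k - \<beta>$i*g$k)^2 = 0"
      by (subst sum_nonneg_eq_0_iff[symmetric]) auto
    then show ?thesis by simp
  qed
  then show "\<delta> = outer \<beta> (transpose \<delta> *v \<beta>)"
    unfolding g_def[symmetric] by (simp add: vec_eq_iff outer_def)
qed

lemma alg_fwd:
  fixes \<beta> \<gamma> :: "real^3" and \<delta> :: "real^3^3"
  assumes e0: "1 + \<beta> \<bullet> \<beta> + \<gamma> \<bullet> \<gamma> + frob \<delta> = 4" and eb: "\<delta> *v \<gamma> = \<beta>"
    and eg: "transpose \<delta> *v \<beta> = \<gamma>" and ed: "outer \<beta> \<gamma> - cof3 \<delta> = \<delta>"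
  shows "delta_system \<beta> \<delta>"
proof -
  have dd: "\<delta> ** transpose \<delta> = outer \<beta> \<beta> - det \<delta> *\<^sub>R mat 1"
  proof -
    have "\<delta> ** transpose \<delta> = (outer \<beta> \<gamma> - cof3 \<delta>) ** transpose \<delta>" using ed by simp
    also have "\<dots> = outer \<beta> \<beta> - det \<delta> *\<^sub>R mat 1" unfolding M8 M2 M1 eb ..
    finally show ?thesis .
  qed
  have fr: "frob \<delta> = \<beta> \<bullet> \<beta> - 3 * det \<delta>"
    unfolding frob_def M17 dd M21 ..
  have gg: "\<gamma> \<bullet> \<gamma> = \<beta> \<bullet> \<beta>"
    using eg eb M7[of \<delta> \<beta> \<gamma>] by simp
  have d: "det \<delta> = \<beta> \<bullet> \<beta> - 1" using e0 fr gg by linarith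
  show ?thesis
    unfolding delta_system_def power2_norm_eq_inner dd d
    by (simp add: algebra_simps)
qed

lemma alg_bwd:
  fixes \<beta> \<gamma> :: "real^3" and \<delta> :: "real^3^3"
  assumes nb: "norm \<beta> \<le> 1" and g: "\<gamma> = transpose \<delta> *v \<beta>" and ds: "delta_system \<beta> \<delta>"
  shows "1 + \<beta> \<bullet> \<beta> + \<gamma> \<bullet> \<gamma> + frob \<delta> = 4" "\<delta> *v \<gamma> = \<beta>"
    "transpose \<delta> *v \<beta> = \<gamma>" "outer \<beta> \<gamma> - cof3 \<delta> = \<delta>"
proof -
  define b where "b = \<beta> \<bullet> \<beta>"
  have dd: "\<delta> ** transpose \<delta> = (1 - b) *\<^sub>R mat 1 + 1 *\<^sub>R outer \<beta> \<beta>" and det: "det \<delta> = b - 1"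
    using ds unfolding delta_system_def power2_norm_eq_inner b_def by auto
  have b1: "b \<le> 1" using nb unfolding b_def power2_norm_eq_inner[symmetric]
    by (simp add: power_le_one norm_ge_zero)
  show eb: "\<delta> *v \<gamma> = \<beta>"
    unfolding g M10[symmetric] dd M11 M12 M3 b_def by (simp add: algebra_simps)
  have gg: "\<gamma> \<bullet> \<gamma> = b"
    using g eb M7[of \<delta> \<beta> \<gamma>] b_def by simp
  have fr: "frob \<delta> = 3 * (1 - b) + b"
    unfolding frob_def M17 dd M18 b_def by simp
  show "1 + \<beta> \<bullet> \<beta> + \<gamma> \<bullet> \<gamma> + frob \<delta> = 4"
    using gg fr b_def by simp
  show "transpose \<delta> *v \<beta> = \<gamma>" using g by simp
  define D where "D = outer \<beta> \<gamma> - cof3 \<delta> - \<delta>"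
  have DT: "D ** transpose \<delta> = 0"
    unfolding D_def M8 M2 M1 eb dd det by (simp add: algebra_simps)
  have "D = 0"
  proof (cases "b = 1")
    case True
    have "\<delta> ** transpose \<delta> = outer \<beta> \<beta>" using dd True by simp
    from lemR[OF this] True b_def have "\<delta> = outer \<beta> \<gamma>" using g by simp
    then show ?thesis unfolding D_def using M5 by simp
  next
    case False
    then have "det \<delta> \<noteq> 0" using det by simp
    have "D ** transpose \<delta> ** cof3 \<delta> = 0" using DT by simp
    then have "det \<delta> *\<^sub>R D = 0"
      by (simp add: matrix_mul_assoc[symmetric] M1b M23)
    then show ?thesis using \<open>det \<delta> \<noteq> 0\<close> by simp
  qed
  then show "outer \<beta> \<gamma> - cof3 \<delta> = \<delta>" unfolding D_def by simp
qed

lemma pc_sq: "pc c x y z ** pc c x y z = pc (c*c + (x$1*x$1+x$2*x$2+x$3*x$3) + (y$1*y$1+y$2*y$2+y$3*y$3)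
   + (\<Sum>l\<in>UNIV. \<Sum>k\<in>UNIV. z$l$k * z$l$k))
   (2 * c *\<^sub>R x + 2 *\<^sub>R (z *v y)) (2 * c *\<^sub>R y + 2 *\<^sub>R (transpose z *v x))
   (2 * c *\<^sub>R z + 2 *\<^sub>R outer x y - 2 *\<^sub>R cof3 z)"
  apply (simp add: vec_eq_iff split_paired_All forall_2 matrix_matrix_mult_def sum_22)
  apply (simp add: pc_def kron_def sum_3 pauli_def mat_def cof3_def nx_def nx2_def outer_def matrix_vector_mult_def vector_matrix_mult_def transpose_def)
  apply (simp add: complex_eq_iff)
  apply (simp add: algebra_simps)
  done

lemma pc_eq_iff: "pc c x y z = pc c' x' y' z' \<longleftrightarrow> c = c' \<and> x = x' \<and> y = y' \<and> z = z'"
  using pc_inj by blast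

lemma sc8: fixes a x :: "'a::real_vector"
  shows "(1/8) *\<^sub>R (a + x) = (1/4) *\<^sub>R a \<longleftrightarrow> x = a"
proof -
  have "(1/8) *\<^sub>R (a + x) = (1/4) *\<^sub>R a \<longleftrightarrow> (1/8) *\<^sub>R (a + x) = (1/8::real) *\<^sub>R (2 *\<^sub>R a)"
    by simp
  also have "\<dots> \<longleftrightarrow> a + x = 2 *\<^sub>R a" by (subst scaleR_cancel_left) simp
  also have "\<dots> \<longleftrightarrow> x = a" by (simp add: scaleR_2)
  finally show ?thesis .
qed

lemma idem_iff:
  "Pmat \<beta> \<gamma> \<delta> ** Pmat \<beta> \<gamma> \<delta> = Pmat \<beta> \<gamma> \<delta> \<longleftrightarrow>
    (1 + \<beta> \<bullet> \<beta> + \<gamma> \<bullet> \<gamma> + frob \<delta> = 4 \<and> \<delta> *v \<gamma> = \<beta> \<and> transpose \<delta> *v \<beta> = \<gamma>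
     \<and> outer \<beta> \<gamma> - cof3 \<delta> = \<delta>)"
proof -
  have e0: "(1/4) * (1/4) + (((1/4) *\<^sub>R \<beta>)$1 * ((1/4) *\<^sub>R \<beta>)$1 + ((1/4) *\<^sub>R \<beta>)$2 * ((1/4) *\<^sub>R \<beta>)$2
     + ((1/4) *\<^sub>R \<beta>)$3 * ((1/4) *\<^sub>R \<beta>)$3)
     + (((1/4) *\<^sub>R \<gamma>)$1 * ((1/4) *\<^sub>R \<gamma>)$1 + ((1/4) *\<^sub>R \<gamma>)$2 * ((1/4) *\<^sub>R \<gamma>)$2
     + ((1/4) *\<^sub>R \<gamma>)$3 * ((1/4) *\<^sub>R \<gamma>)$3)
     + (\<Sum>l\<in>UNIV. \<Sum>k\<in>UNIV. ((1/4) *\<^sub>R \<delta>)$l$k * ((1/4) *\<^sub>R \<delta>)$l$k)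
     = (1 + \<beta> \<bullet> \<beta> + \<gamma> \<bullet> \<gamma> + frob \<delta>) / 16"
    by (simp add: bf frob_def field_simps)
  have e1: "2 * (1/4) *\<^sub>R ((1/4) *\<^sub>R \<beta>) + 2 *\<^sub>R (((1/4) *\<^sub>R \<delta>) *v ((1/4) *\<^sub>R \<gamma>))
      = (1/8) *\<^sub>R (\<beta> + \<delta> *v \<gamma>)"
    by (simp add: bf field_simps)
  have e2: "2 * (1/4) *\<^sub>R ((1/4) *\<^sub>R \<gamma>) + 2 *\<^sub>R (transpose ((1/4) *\<^sub>R \<delta>) *v ((1/4) *\<^sub>R \<beta>))
      = (1/8) *\<^sub>R (\<gamma> + transpose \<delta> *v \<beta>)"
    by (simp add: bf field_simps)
  have e3: "2 * (1/4) *\<^sub>R ((1/4) *\<^sub>R \<delta>) + 2 *\<^sub>R outer ((1/4) *\<^sub>R \<beta>) ((1/4) *\<^sub>R \<gamma>)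
      - 2 *\<^sub>R cof3 ((1/4) *\<^sub>R \<delta>) = (1/8) *\<^sub>R (\<delta> + (outer \<beta> \<gamma> - cof3 \<delta>))"
    by (simp add: bf field_simps)
  have s0: "(X / 16 = (1::real) / 4) \<longleftrightarrow> X = 4" for X by auto
  show ?thesis
    unfolding Pmat_pc pc_sq pc_eq_iff e0 e1 e2 e3 s0 sc8 by auto
qed

lemma psd_proj:
  fixes P :: "complex^'n^'n"
  assumes h: "hermitian P" and i: "P ** P = P"
  shows "psd P"
proof -
  have PP: "P = cadjoint P ** P" using h i unfolding hermitian_def by simp
  have "0 \<le> Re (\<Sum>i\<in>UNIV. \<Sum>j\<in>UNIV. cnj (x $ i) * P $ i $ j * x $ j)" for x :: "complex^'n"
  proof -
    have "(\<Sum>i\<in>UNIV. \<Sum>j\<in>UNIV. cnj (x $ i) * P $ i $ j * x $ j)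
        = (\<Sum>i\<in>UNIV. \<Sum>j\<in>UNIV. cnj (x $ i) * (cadjoint P ** P) $ i $ j * x $ j)"
      using PP by simp
    also have "\<dots> = (\<Sum>i\<in>UNIV. \<Sum>j\<in>UNIV. \<Sum>k\<in>UNIV. cnj (x $ i) * cnj (P $ k $ i) * P $ k $ j * x $ j)"
      unfolding matrix_matrix_mult_def cadjoint_def
      by (simp add: sum_distrib_left sum_distrib_right mult.assoc)
    also have "\<dots> = (\<Sum>i\<in>UNIV. \<Sum>k\<in>UNIV. \<Sum>j\<in>UNIV. cnj (x $ i) * cnj (P $ k $ i) * P $ k $ j * x $ j)"
      by (rule sum.cong[OF refl], rule sum.swap)
    also have "\<dots> = (\<Sum>k\<in>UNIV. \<Sum>i\<in>UNIV. \<Sum>j\<in>UNIV. cnj (x $ i) * cnj (P $ k $ i) * P $ k $ j * x $ j)"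
      by (rule sum.swap)
    also have "\<dots> = (\<Sum>k\<in>UNIV. cnj ((P *v x) $ k) * (P *v x) $ k)"
      unfolding matrix_vector_mult_def
      apply (simp add: sum_product mult_ac)
      apply (rule sum.cong[OF refl])
      apply (rule sum.swap)
      done
    also have "Re \<dots> = (\<Sum>k\<in>UNIV. Re ((P *v x) $ k) * Re ((P *v x) $ k) + Im ((P *v x) $ k) * Im ((P *v x) $ k))"
      by simp
    also have "\<dots> \<ge> 0" by (intro sum_nonneg) simp
    finally show ?thesis .
  qed
  then show ?thesis unfolding psd_def using h by blast
qed

lemma pur_iff: "purification (rho \<beta>) (Pmat \<beta> \<gamma> \<delta>) \<longleftrightarrow> Pmat \<beta> \<gamma> \<delta> ** Pmat \<beta> \<gamma> \<delta> = Pmat \<beta> \<gamma> \<delta>"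
proof -
  have h: "hermitian (Pmat \<beta> \<gamma> \<delta>)" unfolding Pmat_pc by (rule hermitian_pc)
  have t: "trace (Pmat \<beta> \<gamma> \<delta>) = 1" unfolding Pmat_pc trace_pc by simp
  show ?thesis
    unfolding purification_def pure_state_def using h t ptrace_Pmat psd_proj[OF h] by auto
qed

lemma part1:
  assumes "norm \<beta> \<le> 1"
  shows "purification (rho \<beta>) (Pmat \<beta> \<gamma> \<delta>) \<longleftrightarrow> \<gamma> = transpose \<delta> *v \<beta> \<and> delta_system \<beta> \<delta>"
  unfolding pur_iff idem_iff
  using alg_fwd alg_bwd[OF assms] by metis

lemma ptrace_x: assumes "ptrace2 (pc (1/4) x y z) = rho \<beta>"
  shows "x = (1/4) *\<^sub>R \<beta>"
proof -
  from assms have "\<forall>a b. ptrace2 (pc (1/4) x y z) $ a $ b = rho \<beta> $ a $ b" by simp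
  then have h: "\<forall>a b. Re (ptrace2 (pc (1/4) x y z) $ a $ b) = Re (rho \<beta> $ a $ b) \<and>
     Im (ptrace2 (pc (1/4) x y z) $ a $ b) = Im (rho \<beta> $ a $ b)" by simp
  then show ?thesis
    apply (simp only: forall_2)
    apply (simp add: pcsimps ptrace2_def rho_def sum_2 vec_eq_iff forall_3)
    done
qed

lemma part2:
  assumes "purification (rho \<beta>) P"
  shows "\<exists>\<gamma> \<delta>. P = Pmat \<beta> \<gamma> \<delta>"
proof -
  have h: "hermitian P" and t: "trace P = 1" and p: "ptrace2 P = rho \<beta>"
    using assms unfolding purification_def pure_state_def by auto
  obtain c x y z where P: "P = pc c x y z" using herm_decomp[OF h] by blast
  have c: "c = 1/4" using t unfolding P trace_pc
    by (metis of_real_eq_1_iff mult.commute divide_eq_eq zero_neq_numeral nonzero_mult_div_cancel_left)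
  have x: "x = (1/4) *\<^sub>R \<beta>" using p ptrace_x unfolding P c by blast
  have "P = Pmat \<beta> (4 *\<^sub>R y) (4 *\<^sub>R z)" unfolding Pmat_pc P c x by simp
  then show ?thesis by blast
qed

lemma M24: "(s *\<^sub>R mat 1 + t *\<^sub>R outer u u) ** (s *\<^sub>R mat 1 + t *\<^sub>R outer u u)
   = (s * s) *\<^sub>R mat 1 + (2 * s * t + t * t * (u \<bullet> u)) *\<^sub>R outer u u"
  by (simp add: bf algebra_simps)
lemma M25: "(- A) ** transpose (- A) = A ** transpose (A :: real^3^3)"
  by (simp add: bf algebra_simps)
lemma M26: "transpose (s *\<^sub>R mat 1 + t *\<^sub>R outer u u) = s *\<^sub>R mat 1 + t *\<^sub>R outer u u"
  by (simp add: bf algebra_simps)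

lemma ds_unfold:
  assumes "delta_system \<beta> \<delta>"
  shows "\<delta> ** transpose \<delta> = (1 - \<beta> \<bullet> \<beta>) *\<^sub>R mat 1 + outer \<beta> \<beta>" "det \<delta> = \<beta> \<bullet> \<beta> - 1"
  using assms unfolding delta_system_def power2_norm_eq_inner by auto

lemma b_le: "norm (\<beta>::real^3) \<le> 1 \<Longrightarrow> \<beta> \<bullet> \<beta> \<le> 1"
  by (metis power2_norm_eq_inner norm_ge_zero power_le_one)
lemma b_lt: "norm (\<beta>::real^3) < 1 \<Longrightarrow> \<beta> \<bullet> \<beta> < 1"
  by (metis power2_norm_eq_inner abs_norm_cancel abs_square_less_1)
lemma b_eq: "norm (\<beta>::real^3) = 1 \<Longrightarrow> \<beta> \<bullet> \<beta> = 1"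
  by (metis power2_norm_eq_inner power_one)
lemma norm_of_inner: "(v::real^3) \<bullet> v = 1 \<Longrightarrow> norm v = 1"
  by (simp add: norm_eq_sqrt_inner)

lemma t1: fixes s :: real assumes "s \<ge> 0" shows "2 * s * (1/(1+s)) + (1/(1+s)) * (1/(1+s)) * (1 - s * s) = 1"
proof -
  have p: "1 + s > 0" using assms by simp
  have q: "1 - s * s = (1 - s) * (1 + s)" by (simp add: algebra_simps)
  have "(1/(1+s)) * (1/(1+s)) * (1 - s * s) = ((1 - s) * (1 + s)) / ((1 + s) * (1 + s))"
    unfolding q by simp
  also have "\<dots> = (1 - s) / (1 + s)" using p by simp
  finally have "(1/(1+s)) * (1/(1+s)) * (1 - s * s) = (1 - s) / (1 + s)" .
  then show ?thesis using p by (simp add: field_simps)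
qed

lemma t2: fixes s :: real assumes "s \<ge> 0" shows "s^3 + s^2 * (1/(1+s)) * (1 - s * s) = s * s"
proof -
  have "1 + s > 0" using assms by simp
  then show ?thesis by (simp add: field_simps power2_eq_square power3_eq_cube)
qed

lemma exist_sol:
  assumes nb: "norm \<beta> \<le> 1"
  shows "\<exists>\<delta>. delta_system \<beta> \<delta>"
proof -
  define b where "b = \<beta> \<bullet> \<beta>"
  have b: "b \<le> 1" "0 \<le> b" using b_le[OF nb] unfolding b_def by auto
  define s where "s = sqrt (1 - b)"
  have s: "s \<ge> 0" "s * s = 1 - b" unfolding s_def using b by auto
  have bs: "b = 1 - s * s" using s by simp
  define t where "t = 1 / (1 + s)"
  define A where "A = s *\<^sub>R mat 1 + t *\<^sub>R outer \<beta> \<beta>"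
  have c1: "2 * s * t + t * t * b = 1" unfolding t_def bs using t1[OF s(1)] .
  have c2: "s^3 + s^2 * t * b = 1 - b" unfolding t_def bs using t2[OF s(1)] by simp
  have "delta_system \<beta> (- A)"
    unfolding delta_system_def power2_norm_eq_inner M25 M20
    unfolding A_def M26 M24 M16 b_def[symmetric] c1 c2 s(2)
    by simp
  then show ?thesis by blast
qed

lemma sys_rot:
  assumes ds0: "delta_system \<beta> \<delta>0" and S: "rotation_matrix S"
  shows "delta_system \<beta> (\<delta>0 ** S)"
proof -
  have SS: "S ** transpose S = mat 1" using S unfolding rotation_matrix_def orthogonal_matrix_def by auto
  have dS: "det S = 1" using S unfolding rotation_matrix_def by auto
  have "(\<delta>0 ** S) ** transpose (\<delta>0 ** S) = \<delta>0 ** (S ** transpose S) ** transpose \<delta>0"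
    by (simp add: matrix_transpose_mul matrix_mul_assoc)
  also have "\<dots> = \<delta>0 ** transpose \<delta>0" using SS by simp
  finally have 1: "(\<delta>0 ** S) ** transpose (\<delta>0 ** S) = \<delta>0 ** transpose \<delta>0" .
  have 2: "det (\<delta>0 ** S) = det \<delta>0" using dS by (simp add: det_mul)
  show ?thesis using ds0 unfolding delta_system_def 1 2 .
qed

lemma sol_rank1:
  assumes ds: "delta_system \<beta> \<delta>" and b1: "\<beta> \<bullet> \<beta> = 1"
  shows "\<delta> = outer \<beta> (transpose \<delta> *v \<beta>)" "norm (transpose \<delta> *v \<beta>) = 1"
proof -
  have dd: "\<delta> ** transpose \<delta> = outer \<beta> \<beta>" using ds_unfold(1)[OF ds] b1 by simp
  show "\<delta> = outer \<beta> (transpose \<delta> *v \<beta>)" using lemR(1)[OF dd b1] .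
  show "norm (transpose \<delta> *v \<beta>) = 1" using lemR(2)[OF dd b1] norm_of_inner by blast
qed

lemma part4:
  assumes nb: "norm \<beta> \<le> 1" and ds0: "delta_system \<beta> \<delta>0"
  shows "{\<delta>. delta_system \<beta> \<delta>} = {\<delta>0 ** S | S. rotation_matrix S}"
proof
  show "{\<delta>0 ** S | S. rotation_matrix S} \<subseteq> {\<delta>. delta_system \<beta> \<delta>}"
    using sys_rot[OF ds0] by blast
next
  show "{\<delta>. delta_system \<beta> \<delta>} \<subseteq> {\<delta>0 ** S | S. rotation_matrix S}"
  proof
    fix \<delta> assume "\<delta> \<in> {\<delta>. delta_system \<beta> \<delta>}"
    then have ds: "delta_system \<beta> \<delta>" by simp
    have "\<exists>S. \<delta> = \<delta>0 ** S \<and> rotation_matrix S"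
    proof (cases "\<beta> \<bullet> \<beta> = 1")
      case True
      define u where "u = transpose \<delta> *v \<beta>"
      define v where "v = transpose \<delta>0 *v \<beta>"
      have du: "\<delta> = outer \<beta> u" "norm u = 1" using sol_rank1[OF ds True] unfolding u_def by auto
      have dv: "\<delta>0 = outer \<beta> v" "norm v = 1" using sol_rank1[OF ds0 True] unfolding v_def by auto
      obtain f where f: "orthogonal_transformation f" "det (matrix f) = 1" "f v = u"
        using rotation_exists[of v u] du(2) dv(2) by auto
      have lf: "linear f" and om: "orthogonal_matrix (matrix f)"
        using f(1) orthogonal_transformation_matrix by auto
      have Rv: "matrix f *v v = u" using f(3) matrix_vector_mul(2)[OF lf] by metis
      define S where "S = transpose (matrix f)"
      have rS: "rotation_matrix S" unfolding S_def rotation_matrix_def using om f(2) by simp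
      have "\<delta>0 ** S = \<delta>" unfolding S_def dv(1) M2 Rv du(1) ..
      then show ?thesis using rS by metis
    next
      case False
      then have bl: "\<beta> \<bullet> \<beta> < 1" using b_le[OF nb] by simp
      have d0: "det \<delta>0 \<noteq> 0" using ds_unfold(2)[OF ds0] bl by simp
      then have "invertible \<delta>0" by (simp add: invertible_det_nz)
      then obtain B where B: "B ** \<delta>0 = mat 1" using invertible_left_inverse by blast
      have B2: "\<delta>0 ** B = mat 1" using B matrix_left_right_inverse by blast
      define S where "S = B ** \<delta>"
      have 1: "\<delta>0 ** S = \<delta>" unfolding S_def by (simp add: matrix_mul_assoc B2)
      have "S ** transpose S = B ** (\<delta> ** transpose \<delta>) ** transpose B"
        unfolding S_def by (simp add: matrix_transpose_mul matrix_mul_assoc)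
      also have "\<dots> = B ** (\<delta>0 ** transpose \<delta>0) ** transpose B"
        using ds_unfold(1)[OF ds] ds_unfold(1)[OF ds0] by simp
      also have "\<dots> = (B ** \<delta>0) ** transpose (B ** \<delta>0)"
        by (simp add: matrix_transpose_mul matrix_mul_assoc)
      also have "\<dots> = mat 1" using B by simp
      finally have SS: "S ** transpose S = mat 1" .
      then have "transpose S ** S = mat 1" using matrix_left_right_inverse by blast
      then have oS: "orthogonal_matrix S" using SS unfolding orthogonal_matrix_def by simp
      have "det \<delta> = det \<delta>0 * det S" using 1 det_mul by metis
      then have "det S = 1" using d0 ds_unfold(2)[OF ds] ds_unfold(2)[OF ds0] by simp
      then show ?thesis using oS 1 unfolding rotation_matrix_def by metis
    qed
    then show "\<delta> \<in> {\<delta>0 ** S | S. rotation_matrix S}" by blast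
  qed
qed

lemma Pmat_inj: "Pmat \<beta> \<gamma> \<delta> = Pmat \<beta> \<gamma>' \<delta>' \<Longrightarrow> \<gamma> = \<gamma>' \<and> \<delta> = \<delta>'"
  unfolding Pmat_pc pc_eq_iff by simp

lemma part5:
  assumes nb: "norm \<beta> < 1" and ds0: "delta_system \<beta> \<delta>0"
  shows "bij_betw (\<lambda>S. Pmat \<beta> (transpose (\<delta>0 ** S) *v \<beta>) (\<delta>0 ** S))
                    {S. rotation_matrix S} {P. purification (rho \<beta>) P}"
proof -
  have nb1: "norm \<beta> \<le> 1" using nb by simp
  have d0: "det \<delta>0 \<noteq> 0" using ds_unfold(2)[OF ds0] b_lt[OF nb] by simp
  then have "invertible \<delta>0" by (simp add: invertible_det_nz)
  then obtain B where B: "B ** \<delta>0 = mat 1" using invertible_left_inverse by blast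
  show ?thesis unfolding bij_betw_def
  proof
    show "inj_on (\<lambda>S. Pmat \<beta> (transpose (\<delta>0 ** S) *v \<beta>) (\<delta>0 ** S)) {S. rotation_matrix S}"
    proof (rule inj_onI)
      fix S S' assume "Pmat \<beta> (transpose (\<delta>0 ** S) *v \<beta>) (\<delta>0 ** S) = Pmat \<beta> (transpose (\<delta>0 ** S') *v \<beta>) (\<delta>0 ** S')"
      then have "\<delta>0 ** S = \<delta>0 ** S'" using Pmat_inj by blast
      then have "B ** (\<delta>0 ** S) = B ** (\<delta>0 ** S')" by simp
      then show "S = S'" by (simp add: matrix_mul_assoc B)
    qed
  next
    show "(\<lambda>S. Pmat \<beta> (transpose (\<delta>0 ** S) *v \<beta>) (\<delta>0 ** S)) ` {S. rotation_matrix S} = {P. purification (rho \<beta>) P}"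
    proof
      show "(\<lambda>S. Pmat \<beta> (transpose (\<delta>0 ** S) *v \<beta>) (\<delta>0 ** S)) ` {S. rotation_matrix S} \<subseteq> {P. purification (rho \<beta>) P}"
        using part1[OF nb1] sys_rot[OF ds0] by auto
    next
      show "{P. purification (rho \<beta>) P} \<subseteq> (\<lambda>S. Pmat \<beta> (transpose (\<delta>0 ** S) *v \<beta>) (\<delta>0 ** S)) ` {S. rotation_matrix S}"
      proof
        fix P assume "P \<in> {P. purification (rho \<beta>) P}"
        then have pP: "purification (rho \<beta>) P" by simp
        obtain \<gamma> \<delta> where P: "P = Pmat \<beta> \<gamma> \<delta>" using part2[OF pP] by blast
        have g: "\<gamma> = transpose \<delta> *v \<beta>" and ds: "delta_system \<beta> \<delta>" using pP part1[OF nb1] unfolding P by auto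
        have "\<delta> \<in> {\<delta>0 ** S | S. rotation_matrix S}" using part4[OF nb1 ds0] ds by blast
        then obtain S where S: "\<delta> = \<delta>0 ** S" "rotation_matrix S" by blast
        show "P \<in> (\<lambda>S. Pmat \<beta> (transpose (\<delta>0 ** S) *v \<beta>) (\<delta>0 ** S)) ` {S. rotation_matrix S}"
          unfolding P g S(1) using S(2) by blast
      qed
    qed
  qed
qed

lemma part6:
  assumes nb: "norm \<beta> = 1"
  shows "\<exists>f. bij_betw f (sphere (0 :: real^3) 1) {P. purification (rho \<beta>) P}"
proof -
  have nb1: "norm \<beta> \<le> 1" using nb by simp
  have b1: "\<beta> \<bullet> \<beta> = 1" using b_eq[OF nb] .
  define f where "f = (\<lambda>v. Pmat \<beta> v (outer \<beta> v))"
  have good: "purification (rho \<beta>) (f v)" if v: "norm v = 1" for v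
  proof -
    have vv: "v \<bullet> v = 1" using v b_eq by blast
    have 1: "v = transpose (outer \<beta> v) *v \<beta>" unfolding M4 M3 using b1 by simp
    have 2: "delta_system \<beta> (outer \<beta> v)"
      unfolding delta_system_def M4 M15 M14 power2_norm_eq_inner b1 vv by simp
    show ?thesis unfolding f_def part1[OF nb1] using 1 2 by blast
  qed
  have "bij_betw f (sphere 0 1) {P. purification (rho \<beta>) P}"
    unfolding bij_betw_def
  proof
    show "inj_on f (sphere 0 1)"
      by (rule inj_onI) (use Pmat_inj in \<open>auto simp: f_def\<close>)
  next
    show "f ` sphere 0 1 = {P. purification (rho \<beta>) P}"
    proof
      show "f ` sphere 0 1 \<subseteq> {P. purification (rho \<beta>) P}" using good by auto
    next
      show "{P. purification (rho \<beta>) P} \<subseteq> f ` sphere 0 1"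
      proof
        fix P assume "P \<in> {P. purification (rho \<beta>) P}"
        then have pP: "purification (rho \<beta>) P" by simp
        obtain \<gamma> \<delta> where P: "P = Pmat \<beta> \<gamma> \<delta>" using part2[OF pP] by blast
        have g: "\<gamma> = transpose \<delta> *v \<beta>" and ds: "delta_system \<beta> \<delta>" using pP part1[OF nb1] unfolding P by auto
        have "\<delta> = outer \<beta> \<gamma>" "norm \<gamma> = 1" using sol_rank1[OF ds b1] g by auto
        then show "P \<in> f ` sphere 0 1" unfolding P f_def by auto
      qed
    qed
  qed
  then show ?thesis by blast
qed

theorem theorem2p1:
  fixes \<beta> :: "real^3"
  assumes "norm \<beta> \<le> 1"
  shows
    "(\<forall>\<gamma> \<delta>. purification (rho \<beta>) (Pmat \<beta> \<gamma> \<delta>) \<longleftrightarrow>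
              \<gamma> = transpose \<delta> *v \<beta> \<and> delta_system \<beta> \<delta>)
   \<and> (\<forall>P. purification (rho \<beta>) P \<longrightarrow> (\<exists>\<gamma> \<delta>. P = Pmat \<beta> \<gamma> \<delta>))
   \<and> (\<exists>\<delta>. delta_system \<beta> \<delta>)
   \<and> (\<forall>\<delta>0. delta_system \<beta> \<delta>0 \<longrightarrow>
          {\<delta>. delta_system \<beta> \<delta>} = {\<delta>0 ** S | S. rotation_matrix S})
   \<and> (norm \<beta> < 1 \<longrightarrow>
        (\<forall>\<delta>0. delta_system \<beta> \<delta>0 \<longrightarrow>
           bij_betw (\<lambda>S. Pmat \<beta> (transpose (\<delta>0 ** S) *v \<beta>) (\<delta>0 ** S))
                    {S. rotation_matrix S} {P. purification (rho \<beta>) P}))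
   \<and> (norm \<beta> = 1 \<longrightarrow>
        (\<exists>f. bij_betw f (sphere (0 :: real^3) 1) {P. purification (rho \<beta>) P}))"
  using part1[OF assms] part2 exist_sol[OF assms] part4[OF assms] part5 part6 by blast


end
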